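(* Let $z\neq 0,1$ be a fixed complex constant. The function \[ F_0(k,a,b) = z^{b+k}(z-1)^{a-b}\,\frac{\Gamma(a+k)}{\Gamma(b+k)}\,\Gamma(b-a) \] is a WZ seed in the variables $a,b$.
   Context: A term $F(n_1,\dots,n_r)$ is hypergeometric in $n_1,\dots,n_r$ if each ratio $F(\dots,n_i+1,\dots)/F(\dots,n_i,\dots)$ is a rational function of $n_1,\dots,n_r$. Write $\Delta_n f(n)=f(n+1)-f(n)$. Two hypergeometric terms $F(n,k),G(n,k)$ form a WZ pair, and $G$ is called a WZ mate of $F$, if $\Delta_n F(n,k)=\Delta_k G(n,k)$. A hypergeometric term $F_0(k,a,b,\dots)$ (hypergeometric in $k,a,b,\dots$) is a WZ seed in the variables $a,b,\dots$ if for all integers $K,A,B,\dots$ and all complex $k_0$ and all values of the parameters $a,b,\dots$, the term $F(n,k)=F_0(Kn+k_0+k,\,An+a,\,Bn+b,\dots)$ has a WZ mate $G(n,k)$ (a hypergeometric term). Factors such as $(-1)^x$ or $z^x$ with non-integer exponent $x$ are understood as hypergeometric factors satisfying $(-1)^{x+1}=-(-1)^x$, $z^{x+1}=z\cdot z^x$ (e.g. defined via a fixed branch of the exponential). *)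

theory Defs
  imports "HOL-Analysis.Analysis" "HOL-Computational_Algebra.Polynomial"
begin

text \<open>Bivariate polynomials over the complex numbers, represented as
  univariate polynomials (in the second variable) whose coefficients are
  univariate polynomials (in the first variable).  A bivariate rational
  function is a quotient of two such polynomials.\<close>

definition beval :: "complex poly poly \<Rightarrow> complex \<Rightarrow> complex \<Rightarrow> complex" where
  "beval P x y = poly (poly P [:y:]) x"

text \<open>The term F0(k,a,b) = z^(b+k) (z-1)^(a-b) Gamma(a+k)/Gamma(b+k) Gamma(b-a),
  where z^x = exp(x Lz) and (z-1)^x = exp(x Lz1) for fixed logarithms
  Lz of z and Lz1 of z-1 (fixed branches).\<close>

definition F0 :: "complex \<Rightarrow> complex \<Rightarrow> complex \<Rightarrow> complex \<Rightarrow> complex \<Rightarrow> complex" where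
  "F0 Lz Lz1 k a b =
     exp ((b + k) * Lz) * exp ((a - b) * Lz1) * Gamma (a + k) / Gamma (b + k) * Gamma (b - a)"

definition wz_mate :: "(int \<Rightarrow> int \<Rightarrow> complex) \<Rightarrow> (int \<Rightarrow> int \<Rightarrow> complex)
    \<Rightarrow> (int \<Rightarrow> int \<Rightarrow> bool) \<Rightarrow> bool" where
  "wz_mate F G Bad \<longleftrightarrow>
     (\<exists>D p1 q1 p2 q2. D \<noteq> 0 \<and> q1 \<noteq> 0 \<and> q2 \<noteq> 0 \<and>
        (\<forall>n k. beval D (of_int n) (of_int k) \<noteq> 0 \<and> \<not> Bad n k \<longrightarrow>
            F (n + 1) k - F n k = G n (k + 1) - G n k \<and>
            beval q1 (of_int n) (of_int k) * G (n + 1) k = beval p1 (of_int n) (of_int k) * G n k \<and>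
            beval q2 (of_int n) (of_int k) * G n (k + 1) = beval p2 (of_int n) (of_int k) * G n k))"

text \<open>Points (n,k) at which one of the Gamma factors of F(n',k') for
  n' in {n,n+1}, k' in {k,k+1} has its argument at a pole (nonpositive integer);
  there F itself is undefined.\<close>

definition seed_bad :: "int \<Rightarrow> int \<Rightarrow> int \<Rightarrow> complex \<Rightarrow> complex \<Rightarrow> complex \<Rightarrow> int \<Rightarrow> int \<Rightarrow> bool" where
  "seed_bad K A B k0 a b n k \<longleftrightarrow>
     (\<exists>i\<in>{0,1::int}. \<exists>j\<in>{0,1::int}.
        let kk = of_int (K * (n + i)) + k0 + of_int (k + j);
            aa = of_int (A * (n + i)) + a;
            bb = of_int (B * (n + i)) + b
        in aa + kk \<in> \<int>\<^sub>\<le>\<^sub>0 \<or> bb + kk \<in> \<int>\<^sub>\<le>\<^sub>0 \<or> bb - aa \<in> \<int>\<^sub>\<le>\<^sub>0)"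

end

theory Submission
  imports Defs
begin


definition Hf :: "complex \<Rightarrow> complex \<Rightarrow> complex \<Rightarrow> complex \<Rightarrow> complex" where
  "Hf Lz Lz1 u d = exp ((u + d) * Lz) * exp (- d * Lz1) * Gamma u * rGamma (u + d) * Gamma d"

lemma F0_H: "F0 Lz Lz1 k a b = Hf Lz Lz1 (a + k) (b - a)"
proof -
  have e1: "(a + k) + (b - a) = b + k" "- (b - a) = a - b" by simp_all
  show ?thesis unfolding F0_def Hf_def e1
    by (simp add: divide_inverse rGamma_inverse_Gamma)
qed

lemma Hf_rec:
  assumes "exp Lz = z" "exp Lz1 = z - 1" "z \<noteq> 1" "u \<notin> \<int>\<^sub>\<le>\<^sub>0" "d \<notin> \<int>\<^sub>\<le>\<^sub>0"
  shows "Hf Lz Lz1 u (d + 1) = z / (z - 1) * Hf Lz Lz1 u d + (- 1 / (z - 1)) * Hf Lz Lz1 (u + 1) d"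
proof -
  have z1: "z - 1 \<noteq> 0" using assms by simp
  have a: "exp ((u + (d + 1)) * Lz) = exp ((u + d) * Lz) * z"
    using assms by (simp add: distrib_right exp_add)
  have a2: "exp ((u + 1 + d) * Lz) = exp ((u + d) * Lz) * z"
    using assms by (simp add: algebra_simps exp_add)
  have b: "exp (- (d + 1) * Lz1) = exp (- d * Lz1) / (z - 1)"
  proof -
    have "- (d + 1) * Lz1 = - d * Lz1 - Lz1" by (simp add: algebra_simps)
    then show ?thesis using assms by (simp add: exp_diff)
  qed
  have g1: "Gamma (d + 1) = d * Gamma d" using Gamma_plus1 assms by blast
  have g2: "Gamma (u + 1) = u * Gamma u" using Gamma_plus1 assms by blast
  have r: "rGamma (u + d) = (u + d) * rGamma (u + d + 1)" using rGamma_plus1 by metis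
  have L: "Hf Lz Lz1 u (d + 1) = exp ((u + d) * Lz) * z * (exp (- d * Lz1) / (z - 1)) * Gamma u * rGamma (u + d + 1) * (d * Gamma d)"
  proof -
    have "u + (d + 1) = u + d + 1" by simp
    then show ?thesis unfolding Hf_def a b g1 by (simp add: add.assoc)
  qed
  have R1: "Hf Lz Lz1 u d = exp ((u + d) * Lz) * exp (- d * Lz1) * Gamma u * ((u + d) * rGamma (u + d + 1)) * Gamma d"
    unfolding Hf_def r ..
  have R2: "Hf Lz Lz1 (u + 1) d = exp ((u + d) * Lz) * z * exp (- d * Lz1) * (u * Gamma u) * rGamma (u + d + 1) * Gamma d"
  proof -
    have "u + 1 + d = u + d + 1" by simp
    then show ?thesis unfolding Hf_def a2 g2 by (simp add: add_ac)
  qed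
  define P where "P = exp ((u + d) * Lz) * exp (- d * Lz1) * Gamma u * rGamma (u + d + 1) * Gamma d"
  have L': "Hf Lz Lz1 u (d + 1) = P * z * d / (z - 1)" unfolding L P_def using z1 by (simp add: field_simps)
  have R1': "Hf Lz Lz1 u d = P * (u + d)" unfolding R1 P_def by (simp add: ac_simps)
  have R2': "Hf Lz Lz1 (u + 1) d = P * z * u" unfolding R2 P_def by (simp add: ac_simps)
  have aux: "P*z*d/(z-1) = z/(z-1)*(P*(u+d)) + (-1/(z-1))*(P*z*u)"
  proof -
    have "z/(z-1)*(P*(u+d)) + (-1/(z-1))*(P*z*u) = (z*(P*(u+d)) - P*z*u)/(z-1)"
      by (simp add: diff_divide_distrib)
    also have "z*(P*(u+d)) - P*z*u = P*z*d" by (simp add: algebra_simps)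
    finally show ?thesis by simp
  qed
  show ?thesis unfolding L' R1' R2' by (rule aux)
qed

lemma nonpos_add_nat: "x \<notin> \<int>\<^sub>\<le>\<^sub>0 \<Longrightarrow> (x::complex) + of_nat m \<notin> \<int>\<^sub>\<le>\<^sub>0"
proof
  assume "x \<notin> \<int>\<^sub>\<le>\<^sub>0" "x + of_nat m \<in> \<int>\<^sub>\<le>\<^sub>0"
  then obtain n where "x + of_nat m = - of_nat n" by (auto elim!: nonpos_Ints_cases')
  then have "x = - of_nat n - of_nat m" by (metis add_diff_cancel_right')
  then have "x = - of_nat (n + m)" by simp
  then show False using \<open>x \<notin> \<int>\<^sub>\<le>\<^sub>0\<close> minus_of_nat_in_nonpos_Ints by metis
qed

lemma Hf_shift:
  assumes "exp Lz = z" "u \<notin> \<int>\<^sub>\<le>\<^sub>0" "j \<le> L"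
  shows "Hf Lz Lz1 (u + of_nat j) d * pochhammer (u + d) L
       = Hf Lz Lz1 u d * z ^ j * pochhammer u j * pochhammer (u + d + of_nat j) (L - j)"
proof -
  have a: "exp ((u + d + of_nat j) * Lz) = exp ((u + d) * Lz) * z ^ j"
  proof -
    have "(u + d + of_nat j) * Lz = (u + d) * Lz + of_nat j * Lz" by (simp add: algebra_simps)
    then show ?thesis using assms by (simp add: exp_add exp_of_nat_mult)
  qed
  have g: "Gamma (u + of_nat j) = pochhammer u j * Gamma u"
    using pochhammer_Gamma[OF assms(2), of j] Gamma_eq_zero_iff[of u] assms(2) by (simp add: field_simps)
  have p: "pochhammer (u + d) L = pochhammer (u + d) j * pochhammer (u + d + of_nat j) (L - j)"
    using pochhammer_product'[of "u+d" j "L - j"] assms(3) by simp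
  have r: "rGamma (u + d) = pochhammer (u + d) j * rGamma (u + d + of_nat j)"
    by (rule pochhammer_rGamma)
  have e: "u + of_nat j + d = u + d + of_nat j" by simp
  show ?thesis unfolding Hf_def e a g p r by (simp add: ac_simps)
qed

lemma Hf_k:
  assumes "exp Lz = z" "u \<notin> \<int>\<^sub>\<le>\<^sub>0"
  shows "Hf Lz Lz1 (u + 1) d * (u + d) = Hf Lz Lz1 u d * z * u"
  using Hf_shift[OF assms, of 1 1 Lz1 d] by simp




definition Hsum :: "complex \<Rightarrow> complex \<Rightarrow> complex poly \<Rightarrow> complex \<Rightarrow> complex \<Rightarrow> complex" where
  "Hsum Lz Lz1 p u d = (\<Sum>j\<le>degree p. coeff p j * Hf Lz Lz1 (u + of_nat j) d)"

lemma Hsum_bound: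
  assumes "degree p \<le> m"
  shows "Hsum Lz Lz1 p u d = (\<Sum>j\<le>m. coeff p j * Hf Lz Lz1 (u + of_nat j) d)"
  unfolding Hsum_def
  by (rule sum.mono_neutral_left) (use assms in \<open>auto simp: coeff_eq_0 not_le\<close>)

lemma Hsum_diff: "Hsum Lz Lz1 (p - q) u d = Hsum Lz Lz1 p u d - Hsum Lz Lz1 q u d"
proof -
  let ?m = "max (degree p) (degree q)"
  have "Hsum Lz Lz1 (p - q) u d = (\<Sum>j\<le>?m. coeff (p - q) j * Hf Lz Lz1 (u + of_nat j) d)"
    by (rule Hsum_bound) (use degree_diff_le_max in auto)
  also have "\<dots> = (\<Sum>j\<le>?m. coeff p j * Hf Lz Lz1 (u + of_nat j) d) - (\<Sum>j\<le>?m. coeff q j * Hf Lz Lz1 (u + of_nat j) d)"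
    by (simp add: algebra_simps sum_subtractf)
  also have "\<dots> = Hsum Lz Lz1 p u d - Hsum Lz Lz1 q u d"
    by (subst (1 2) Hsum_bound[symmetric]) auto
  finally show ?thesis .
qed

lemma Hsum_add: "Hsum Lz Lz1 (p + q) u d = Hsum Lz Lz1 p u d + Hsum Lz Lz1 q u d"
proof -
  let ?m = "max (degree p) (degree q)"
  have "Hsum Lz Lz1 (p + q) u d = (\<Sum>j\<le>?m. coeff (p + q) j * Hf Lz Lz1 (u + of_nat j) d)"
    by (rule Hsum_bound) (use degree_add_le_max in auto)
  also have "\<dots> = (\<Sum>j\<le>?m. coeff p j * Hf Lz Lz1 (u + of_nat j) d) + (\<Sum>j\<le>?m. coeff q j * Hf Lz Lz1 (u + of_nat j) d)"
    by (simp add: algebra_simps sum.distrib)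
  also have "\<dots> = Hsum Lz Lz1 p u d + Hsum Lz Lz1 q u d"
    by (subst (1 2) Hsum_bound[symmetric]) auto
  finally show ?thesis .
qed

lemma Hsum_smult: "Hsum Lz Lz1 (smult c p) u d = c * Hsum Lz Lz1 p u d"
proof -
  have "Hsum Lz Lz1 (smult c p) u d = (\<Sum>j\<le>degree p. coeff (smult c p) j * Hf Lz Lz1 (u + of_nat j) d)"
    by (rule Hsum_bound) (use degree_smult_le in auto)
  then show ?thesis by (simp add: Hsum_def sum_distrib_left ac_simps)
qed

lemma Hsum_pCons0: "Hsum Lz Lz1 (pCons 0 p) u d = Hsum Lz Lz1 p (u + 1) d"
proof -
  have "Hsum Lz Lz1 (pCons 0 p) u d = (\<Sum>j\<le>Suc (degree p). coeff (pCons 0 p) j * Hf Lz Lz1 (u + of_nat j) d)"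
    by (rule Hsum_bound) (simp add: degree_pCons_le)
  also have "\<dots> = (\<Sum>j\<le>degree p. coeff p j * Hf Lz Lz1 (u + 1 + of_nat j) d)"
    by (subst sum.atMost_Suc_shift) (simp add: ac_simps)
  finally show ?thesis by (simp add: Hsum_def)
qed

lemma Hsum_monom: "Hsum Lz Lz1 (monom c i) u d = c * Hf Lz Lz1 (u + of_nat i) d"
proof -
  have "Hsum Lz Lz1 (monom c i) u d = (\<Sum>j\<le>i. coeff (monom c i) j * Hf Lz Lz1 (u + of_nat j) d)"
    by (rule Hsum_bound) (simp add: degree_monom_le)
  also have "\<dots> = c * Hf Lz Lz1 (u + of_nat i) d"
    by (simp add: coeff_monom mult_delta_left sum.delta)
  finally show ?thesis .
qed

lemma mult_lin: "q * [:a, b:] = smult a q + pCons 0 (smult b q)"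
  by (simp add: mult_pCons_right)

lemma Hsum_X:
  assumes "exp Lz = z" "exp Lz1 = z - 1" "z \<noteq> 1" "u \<notin> \<int>\<^sub>\<le>\<^sub>0" "d \<notin> \<int>\<^sub>\<le>\<^sub>0"
  shows "Hsum Lz Lz1 (monom 1 i * [:z / (z - 1), - 1 / (z - 1):] ^ t) u d = Hf Lz Lz1 (u + of_nat i) (d + of_nat t)"
  using assms(4,5)
proof (induction t arbitrary: u d)
  case 0
  then show ?case by (simp add: Hsum_monom)
next
  case (Suc t)
  let ?q = "monom 1 i * [:z / (z - 1), - 1 / (z - 1):] ^ t"
  have e: "monom 1 i * [:z / (z - 1), - 1 / (z - 1):] ^ Suc t = ?q * [:z / (z - 1), - 1 / (z - 1):]"
    by (simp add: ac_simps)
  have u1: "u + 1 \<notin> \<int>\<^sub>\<le>\<^sub>0" using nonpos_add_nat[OF Suc.prems(1), of 1] by simp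
  have ui: "u + of_nat i \<notin> \<int>\<^sub>\<le>\<^sub>0" using nonpos_add_nat[OF Suc.prems(1)] by simp
  have dt: "d + of_nat t \<notin> \<int>\<^sub>\<le>\<^sub>0" using nonpos_add_nat[OF Suc.prems(2)] by simp
  have "Hsum Lz Lz1 (monom 1 i * [:z / (z - 1), - 1 / (z - 1):] ^ Suc t) u d
      = z / (z - 1) * Hsum Lz Lz1 ?q u d + (- 1 / (z - 1)) * Hsum Lz Lz1 ?q (u + 1) d"
    unfolding e mult_lin Hsum_add Hsum_smult Hsum_pCons0 ..
  also have "\<dots> = z / (z - 1) * Hf Lz Lz1 (u + of_nat i) (d + of_nat t) + (- 1 / (z - 1)) * Hf Lz Lz1 (u + of_nat i + 1) (d + of_nat t)"
    using Suc.IH[OF Suc.prems] Suc.IH[OF u1 Suc.prems(2)] by (simp add: ac_simps)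
  also have "\<dots> = Hf Lz Lz1 (u + of_nat i) (d + of_nat t + 1)"
    using Hf_rec[OF assms(1,2,3) ui dt] by simp
  finally show ?case by (simp add: ac_simps)
qed

lemma Gamma_int_shift:
  assumes "(x::complex) \<notin> \<int>\<^sub>\<le>\<^sub>0" "x + of_int M \<notin> \<int>\<^sub>\<le>\<^sub>0"
  shows "Gamma (x + of_int M) * pochhammer (x + of_int M) (nat (- M)) = Gamma x * pochhammer x (nat M)"
proof (cases "M \<ge> 0")
  case True
  then have "x + of_int M = x + of_nat (nat M)" by simp
  then show ?thesis using True pochhammer_Gamma[OF assms(1), of "nat M"] Gamma_eq_zero_iff[of x] assms(1)
    by (simp add: field_simps)
next
  case False
  let ?y = "x + of_int M"
  have "x = ?y + of_nat (nat (- M))" using False by simp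
  then have "Gamma x = pochhammer ?y (nat (-M)) * Gamma ?y"
    using pochhammer_Gamma[OF assms(2), of "nat (-M)"] Gamma_eq_zero_iff[of ?y] assms(2)
    by (simp add: field_simps)
  then show ?thesis using False by simp
qed

lemma rGamma_int_shift:
  "rGamma ((x::complex) + of_int T) * pochhammer x (nat T) = rGamma x * pochhammer (x + of_int T) (nat (- T))"
proof (cases "T \<ge> 0")
  case True
  then have "x + of_int T = x + of_nat (nat T)" by simp
  then show ?thesis using True pochhammer_rGamma[of x "nat T"] by (simp add: ac_simps)
next
  case False
  let ?y = "x + of_int T"
  have e: "?y + of_nat (nat (- T)) = x" using False by simp
  have "rGamma ?y = pochhammer ?y (nat (-T)) * rGamma x"
    using pochhammer_rGamma[of ?y "nat (-T)"] unfolding e .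
  then show ?thesis using False by simp
qed

lemma reo:
  fixes G1 :: complex
  assumes "G1*Pa = g1*qa" "G2*Pb = g2*qb" "R*Pc = r*qc"
  shows "E1*C1*(E2*C2)*G1*R*G2*(Pa*Pb*Pc) = E1*E2*g1*r*g2*(C1*C2*qa*qb*qc)"
proof -
  have "E1*C1*(E2*C2)*G1*R*G2*(Pa*Pb*Pc) = E1*C1*E2*C2*(G1*Pa)*(G2*Pb)*(R*Pc)" by (simp only: mult_ac)
  also have "\<dots> = E1*C1*E2*C2*(g1*qa)*(g2*qb)*(r*qc)" using assms by simp
  also have "\<dots> = E1*E2*g1*r*g2*(C1*C2*qa*qb*qc)" by (simp only: mult_ac)
  finally show ?thesis .
qed

lemma Hf_int_shift:
  assumes "u \<notin> \<int>\<^sub>\<le>\<^sub>0" "u + of_int M \<notin> \<int>\<^sub>\<le>\<^sub>0" "d \<notin> \<int>\<^sub>\<le>\<^sub>0" "d + of_int N \<notin> \<int>\<^sub>\<le>\<^sub>0"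
  shows "Hf Lz Lz1 (u + of_int M) (d + of_int N) *
           (pochhammer (u + of_int M) (nat (- M)) * pochhammer (d + of_int N) (nat (- N)) * pochhammer (u + d) (nat (M + N)))
       = Hf Lz Lz1 u d * (exp (of_int (M + N) * Lz) * exp (- of_int N * Lz1) *
           pochhammer u (nat M) * pochhammer d (nat N) * pochhammer (u + d + of_int (M + N)) (nat (- (M + N))))"
proof -
  have w: "u + of_int M + (d + of_int N) = (u + d) + of_int (M + N)" by simp
  have e1: "exp ((u + d + of_int (M + N)) * Lz) = exp ((u + d) * Lz) * exp (of_int (M + N) * Lz)"
    by (simp add: distrib_right exp_add)
  have e2: "exp (- (d + of_int N) * Lz1) = exp (- d * Lz1) * exp (- of_int N * Lz1)"
    by (simp add: algebra_simps exp_add flip: exp_add)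
  note g1 = Gamma_int_shift[OF assms(1,2)]
  note g2 = Gamma_int_shift[OF assms(3,4)]
  note r = rGamma_int_shift[of "u + d" "M + N"]
  show ?thesis unfolding Hf_def w e1 e2
    by (rule reo[OF g1 g2 r])
qed




lemma beval_add [simp]: "beval (P + Q) x y = beval P x y + beval Q x y"
  by (simp add: beval_def)
lemma beval_mult [simp]: "beval (P * Q) x y = beval P x y * beval Q x y"
  by (simp add: beval_def)
lemma beval_const: "beval [:[:c:]:] x y = c"
  by (simp add: beval_def)
lemma beval_x: "beval [:[:0, 1:]:] x y = x"
  by (simp add: beval_def)
lemma beval_y: "beval [:0, 1:] x y = y"
  by (simp add: beval_def)
lemma beval_0 [simp]: "beval 0 x y = 0"
  by (simp add: beval_def)

definition pf :: "(complex \<Rightarrow> complex \<Rightarrow> complex) \<Rightarrow> bool" where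
  "pf f \<longleftrightarrow> (\<exists>P. \<forall>x y. beval P x y = f x y)"

lemma pf_const [simp, intro]: "pf (\<lambda>x y. c)"
  unfolding pf_def using beval_const by blast
lemma pf_x [simp, intro]: "pf (\<lambda>x y. x)"
  unfolding pf_def using beval_x by blast
lemma pf_y [simp, intro]: "pf (\<lambda>x y. y)"
  unfolding pf_def using beval_y by blast
lemma pf_add: "pf f \<Longrightarrow> pf g \<Longrightarrow> pf (\<lambda>x y. f x y + g x y)"
  unfolding pf_def by (metis beval_add)
lemma pf_mult: "pf f \<Longrightarrow> pf g \<Longrightarrow> pf (\<lambda>x y. f x y * g x y)"
  unfolding pf_def by (metis beval_mult)
lemma pf_poch: "pf f \<Longrightarrow> pf (\<lambda>x y. pochhammer (f x y) m)"
proof (induction m)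
  case 0
  then show ?case by simp
next
  case (Suc m)
  have "pf (\<lambda>x y. pochhammer (f x y) m * (f x y + of_nat m))"
  proof -
    have h1: "pf (\<lambda>x y. f x y + of_nat m)" using pf_add[OF Suc.prems pf_const] .
    have h2: "pf (\<lambda>x y. pochhammer (f x y) m)" using Suc.IH Suc.prems .
    show ?thesis using pf_mult[OF h2 h1] .
  qed
  then show ?case by (simp add: pochhammer_Suc)
qed
lemma pf_sum:
  fixes g :: "nat \<Rightarrow> complex \<Rightarrow> complex \<Rightarrow> complex" and L :: nat
  shows "(\<And>j. pf (g j)) \<Longrightarrow> pf (\<lambda>x y. \<Sum>j\<le>L. g j x y)"
proof (induction L)
  case 0
  then show ?case by simp
next
  case (Suc L)
  have "pf (\<lambda>x y. (\<Sum>j\<le>L. g j x y) + g (Suc L) x y)"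
    using pf_add[OF Suc.IH Suc.prems] Suc.prems by blast
  then show ?case by (simp only: sum.atMost_Suc)
qed

definition rep :: "(complex \<Rightarrow> complex \<Rightarrow> complex) \<Rightarrow> complex poly poly" where
  "rep f = (SOME P. \<forall>x y. beval P x y = f x y)"

lemma rep_eval:
  assumes "pf f" shows "beval (rep f) x y = f x y"
proof -
  from assms obtain P where "\<forall>x y. beval P x y = f x y" unfolding pf_def by blast
  then have "\<forall>x y. beval (rep f) x y = f x y" unfolding rep_def by (rule someI)
  then show ?thesis by blast
qed

lemma rep_nz: "pf f \<Longrightarrow> f x0 y0 \<noteq> 0 \<Longrightarrow> rep f \<noteq> 0"
  using rep_eval[of f x0 y0] by auto

lemma pf_aff: "pf (\<lambda>x y. c + a * x + y)"
proof -
  have h: "pf (\<lambda>x y. c + a * x)" using pf_add[OF pf_const pf_mult[OF pf_const pf_x]] .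
  show ?thesis using pf_add[OF h pf_y] .
qed
lemma pf_affx: "pf (\<lambda>x y. c + a * x)"
  using pf_add[OF pf_const pf_mult[OF pf_const pf_x]] .

lemma poch1_nz: "pochhammer (1::complex) m \<noteq> 0"
proof -
  have "pochhammer (1::complex) m = fact m" by (rule pochhammer_fact[symmetric])
  then show ?thesis by simp
qed

lemma rep_poch_aff_nz: "rep (\<lambda>x y. pochhammer (c + a * x + y) m) \<noteq> 0"
proof (rule rep_nz[of _ 0 "1 - c"])
  show "pf (\<lambda>x y. pochhammer (c + a * x + y) m)" by (rule pf_poch[OF pf_aff])
  have "c + a * 0 + (1 - c) = 1" by simp
  then show "pochhammer (c + a * 0 + (1 - c)) m \<noteq> 0"
    using poch1_nz by simp
qed

lemma rep_aff_nz: "rep (\<lambda>x y. c + a * x + y) \<noteq> 0"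
  by (rule rep_nz[of _ 0 "1 - c"]) (rule pf_aff, simp)

lemma rep_poch_affx_nz:
  assumes "a \<noteq> 0 \<or> m = 0"
  shows "rep (\<lambda>x y. pochhammer (c + a * x) m) \<noteq> 0"
proof (cases "a = 0")
  case True
  then have "m = 0" using assms by simp
  then show ?thesis by (intro rep_nz[of _ 0 0]) (rule pf_poch[OF pf_affx], simp)
next
  case False
  show ?thesis
  proof (rule rep_nz[of _ "(1 - c) / a" 0])
    show "pf (\<lambda>x y. pochhammer (c + a * x) m)" by (rule pf_poch[OF pf_affx])
    have "c + a * ((1 - c) / a) = 1" using False by simp
    then show "pochhammer (c + a * ((1 - c) / a)) m \<noteq> 0"
      using poch1_nz by simp
  qed
qed




lemma poch_nonpole:
  assumes "(x::complex) \<notin> \<int>\<^sub>\<le>\<^sub>0" "pochhammer (x + of_int M) (nat (- M)) \<noteq> 0"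
  shows "x + of_int M \<notin> \<int>\<^sub>\<le>\<^sub>0"
proof (cases "M \<ge> 0")
  case True
  then have "x + of_int M = x + of_nat (nat M)" by simp
  then show ?thesis using nonpos_add_nat[OF assms(1)] by metis
next
  case False
  let ?y = "x + of_int M"
  let ?m = "nat (- M)"
  have e: "?y + of_nat ?m = x" using False by simp
  show ?thesis
  proof
    assume "?y \<in> \<int>\<^sub>\<le>\<^sub>0"
    then obtain j where j: "?y = - of_nat j" by (auto elim!: nonpos_Ints_cases')
    show False
    proof (cases "j < ?m")
      case True
      then have "pochhammer ?y ?m = 0" using j by (auto simp: pochhammer_eq_0_iff)
      then show False using assms(2) by simp
    next
      case False
      then have "x = - of_nat (j - ?m)" using e j by (simp add: of_nat_diff)
      then show False using assms(1) minus_of_nat_in_nonpos_Ints by metis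
    qed
  qed
qed

lemma reo2:
  fixes G2 :: complex
  assumes "G2 * P2 = H2 * Pi2" "H2 * Den = H1 * Num" "G1 * P1 = H1 * Pi1"
  shows "(P2 * Den * Pi1) * G2 = (P1 * Num * Pi2) * G1"
proof -
  have "(P2 * Den * Pi1) * G2 = (G2 * P2) * Den * Pi1" by (simp only: mult_ac)
  also have "\<dots> = (H2 * Den) * Pi2 * Pi1" using assms(1) by (simp only: mult_ac)
  also have "\<dots> = H1 * Num * Pi2 * Pi1" using assms(2) by simp
  also have "\<dots> = (G1 * P1) * Num * Pi2" using assms(3) by (simp only: mult_ac)
  also have "\<dots> = (P1 * Num * Pi2) * G1" by (simp only: mult_ac)
  finally show ?thesis .
qed

definition Pif :: "complex \<Rightarrow> complex poly \<Rightarrow> complex \<Rightarrow> complex \<Rightarrow> complex" where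
  "Pif z Q u d = (\<Sum>j\<le>degree Q. coeff Q j * z ^ j * pochhammer u j * pochhammer (u + d + of_nat j) (degree Q - j))"

lemma pf_Pif: "pf f \<Longrightarrow> pf g \<Longrightarrow> pf (\<lambda>x y. Pif z Q (f x y) (g x y))"
  unfolding Pif_def
  apply (rule pf_sum)
  apply (rule pf_mult[OF pf_mult[OF pf_const pf_poch]])
   apply assumption
  apply (rule pf_poch)
  apply (rule pf_add[OF pf_add pf_const])
   apply assumption+
  done

lemma G_Pi:
  assumes "exp Lz = z" "u \<notin> \<int>\<^sub>\<le>\<^sub>0"
  shows "Hsum Lz Lz1 Q u d * pochhammer (u + d) (degree Q) = Hf Lz Lz1 u d * Pif z Q u d"
proof -
  have "Hsum Lz Lz1 Q u d * pochhammer (u + d) (degree Q)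
      = (\<Sum>j\<le>degree Q. coeff Q j * (Hf Lz Lz1 (u + of_nat j) d * pochhammer (u + d) (degree Q)))"
    unfolding Hsum_def sum_distrib_right by (simp add: ac_simps)
  also have "\<dots> = (\<Sum>j\<le>degree Q. coeff Q j * (Hf Lz Lz1 u d * z ^ j * pochhammer u j * pochhammer (u + d + of_nat j) (degree Q - j)))"
    by (rule sum.cong[OF refl]) (simp add: Hf_shift[OF assms])
  also have "\<dots> = Hf Lz Lz1 u d * Pif z Q u d"
    unfolding Pif_def sum_distrib_left by (rule sum.cong[OF refl]) (simp add: ac_simps)
  finally show ?thesis .
qed




context
  fixes z Lz Lz1 :: complex and K A B :: int and k0 a b :: complex
begin

definition "MM = K + A"
definition "NN = B - A"
definition "cu = k0 + a + of_int (min 0 MM)"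
definition "cd = b - a + of_int (min 0 NN)"
definition "uS x y = cu + of_int MM * x + y"
definition "dS x = cd + of_int NN * x"
definition "al = nat (max 0 MM)"
definition "al' = nat (- min 0 MM)"
definition "be = nat (max 0 NN)"
definition "be' = nat (- min 0 NN)"
definition "Xp = [:z / (z - 1), - 1 / (z - 1):]"
definition "Pv = monom 1 al * Xp ^ be - monom 1 al' * Xp ^ be'"
definition "Qv = Pv div [:-1, 1:]"
definition "Gm n k = Hsum Lz Lz1 Qv (uS (of_int n) (of_int k)) (dS (of_int n))"
definition "Fm n k = F0 Lz Lz1 (of_int (K * n) + k0 + of_int k) (of_int (A * n) + a) (of_int (B * n) + b)"

lemma Pv_Qv: assumes "z \<noteq> 1" shows "Pv = [:-1, 1:] * Qv"
proof -
  have "z / (z - 1) - 1 / (z - 1) = 1" using assms by (simp add: diff_divide_distrib[symmetric])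
  then have X1: "poly Xp 1 = 1" unfolding Xp_def by simp
  have "poly Pv 1 = 0" unfolding Pv_def by (simp add: X1 poly_monom)
  then have "[:-1, 1:] dvd Pv" using poly_eq_0_iff_dvd[of Pv 1] by simp
  then show ?thesis unfolding Qv_def by (rule dvd_mult_div_cancel[symmetric])
qed

lemma uS_shift: "uS (x + 1) y = uS x y + of_int MM" "uS x (y + 1) = uS x y + 1" "dS (x + 1) = dS x + of_int NN"
  unfolding uS_def dS_def by (simp_all add: algebra_simps)

lemma uS_int: "uS (of_int n) (of_int k) = k0 + a + of_int (MM * n + k + min 0 MM)"
  unfolding uS_def cu_def by (simp add: algebra_simps)
lemma dS_int: "dS (of_int n) = b - a + of_int (NN * n + min 0 NN)"
  unfolding dS_def cd_def by (simp add: algebra_simps)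

lemma Fm_eq:
  "Fm n k = Hf Lz Lz1 (uS (of_int n) (of_int k) + of_nat al') (dS (of_int n) + of_nat be')"
  "Fm (n + 1) k = Hf Lz Lz1 (uS (of_int n) (of_int k) + of_nat al) (dS (of_int n) + of_nat be)"
proof -
  have a1: "of_nat al' = (of_int (- min 0 MM) :: complex)" unfolding al'_def by simp
  have a2: "of_nat al = (of_int (max 0 MM) :: complex)" unfolding al_def by simp
  have b1: "of_nat be' = (of_int (- min 0 NN) :: complex)" unfolding be'_def by simp
  have b2: "of_nat be = (of_int (max 0 NN) :: complex)" unfolding be_def by simp
  have mm: "min 0 MM + max 0 MM = MM" "min 0 NN + max 0 NN = NN" by arith+
  have "of_int (A * n) + a + (of_int (K * n) + k0 + of_int k) = uS (of_int n) (of_int k) + of_nat al'"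
    unfolding uS_int a1 MM_def by (simp add: algebra_simps)
  moreover have "of_int (B * n) + b - (of_int (A * n) + a) = dS (of_int n) + of_nat be'"
    unfolding dS_int b1 NN_def by (simp add: algebra_simps)
  ultimately show "Fm n k = Hf Lz Lz1 (uS (of_int n) (of_int k) + of_nat al') (dS (of_int n) + of_nat be')"
    unfolding Fm_def F0_H by simp
  have "of_int (A * (n + 1)) + a + (of_int (K * (n + 1)) + k0 + of_int k) = uS (of_int n) (of_int k) + of_nat al"
  proof -
    have "uS (of_int n) (of_int k) + of_nat al = k0 + a + of_int (MM * n + k + (min 0 MM + max 0 MM))"
      unfolding uS_int a2 by (simp add: algebra_simps)
    then have "uS (of_int n) (of_int k) + of_nat al = k0 + a + of_int (MM * n + k + MM)"
      by (simp only: mm)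
    then show ?thesis unfolding MM_def by (simp add: algebra_simps)
  qed
  moreover have "of_int (B * (n + 1)) + b - (of_int (A * (n + 1)) + a) = dS (of_int n) + of_nat be"
  proof -
    have "dS (of_int n) + of_nat be = b - a + of_int (NN * n + (min 0 NN + max 0 NN))"
      unfolding dS_int b2 by (simp add: algebra_simps)
    then have "dS (of_int n) + of_nat be = b - a + of_int (NN * n + NN)"
      by (simp only: mm)
    then show ?thesis unfolding NN_def by (simp add: algebra_simps)
  qed
  ultimately show "Fm (n + 1) k = Hf Lz Lz1 (uS (of_int n) (of_int k) + of_nat al) (dS (of_int n) + of_nat be)"
    unfolding Fm_def F0_H by simp
qed

lemma nonpole_from_good:
  assumes "\<not> seed_bad K A B k0 a b n k"
  shows "uS (of_int n) (of_int k) \<notin> \<int>\<^sub>\<le>\<^sub>0" "dS (of_int n) \<notin> \<int>\<^sub>\<le>\<^sub>0"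
proof -
  have h: "\<And>i. i \<in> {0, 1} \<Longrightarrow>
     of_int (A * (n + i)) + a + (of_int (K * (n + i)) + k0 + of_int (k + 0)) \<notin> \<int>\<^sub>\<le>\<^sub>0 \<and>
     of_int (B * (n + i)) + b - (of_int (A * (n + i)) + a) \<notin> \<int>\<^sub>\<le>\<^sub>0"
    using assms unfolding seed_bad_def Let_def by blast
  have eu: "\<And>i. of_int (A * (n + i)) + a + (of_int (K * (n + i)) + k0 + of_int (k + 0)) = k0 + a + of_int (MM * (n + i) + k)"
    unfolding MM_def by (simp add: algebra_simps)
  have ed: "\<And>i. of_int (B * (n + i)) + b - (of_int (A * (n + i)) + a) = b - a + of_int (NN * (n + i))"
    unfolding NN_def by (simp add: algebra_simps)
  have hu: "\<And>i. i \<in> {0, 1} \<Longrightarrow> k0 + a + of_int (MM * (n + i) + k) \<notin> \<int>\<^sub>\<le>\<^sub>0"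
    using h eu by metis
  have hd: "\<And>i. i \<in> {0, 1} \<Longrightarrow> b - a + of_int (NN * (n + i)) \<notin> \<int>\<^sub>\<le>\<^sub>0"
    using h ed by metis
  show "uS (of_int n) (of_int k) \<notin> \<int>\<^sub>\<le>\<^sub>0"
  proof (cases "MM \<ge> 0")
    case True
    then have "MM * n + k + min 0 MM = MM * (n + 0) + k" by simp
    moreover have "(0::int) \<in> {0, 1}" by simp
    ultimately show ?thesis unfolding uS_int using hu by metis
  next
    case False
    then have "MM * n + k + min 0 MM = MM * (n + 1) + k" by (simp add: algebra_simps)
    moreover have "(1::int) \<in> {0, 1}" by simp
    ultimately show ?thesis unfolding uS_int using hu by metis
  qed
  show "dS (of_int n) \<notin> \<int>\<^sub>\<le>\<^sub>0"
  proof (cases "NN \<ge> 0")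
    case True
    then have "NN * n + min 0 NN = NN * (n + 0)" by simp
    moreover have "(0::int) \<in> {0, 1}" by simp
    ultimately show ?thesis unfolding dS_int using hd by metis
  next
    case False
    then have "NN * n + min 0 NN = NN * (n + 1)" by (simp add: algebra_simps)
    moreover have "(1::int) \<in> {0, 1}" by simp
    ultimately show ?thesis unfolding dS_int using hd by metis
  qed
qed

lemma wz_eq:
  assumes "z \<noteq> 1" "exp Lz = z" "exp Lz1 = z - 1" "\<not> seed_bad K A B k0 a b n k"
  shows "Fm (n + 1) k - Fm n k = Gm n (k + 1) - Gm n k"
proof -
  let ?u = "uS (of_int n) (of_int k)" and ?d = "dS (of_int n)"
  note np = nonpole_from_good[OF assms(4)]
  have "Fm (n + 1) k - Fm n k = Hsum Lz Lz1 Pv ?u ?d"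
    unfolding Fm_eq(2) unfolding Fm_eq(1) Pv_def Hsum_diff Xp_def
    using Hsum_X[OF assms(2,3,1) np] by simp
  also have "\<dots> = Hsum Lz Lz1 Qv (?u + 1) ?d - Hsum Lz Lz1 Qv ?u ?d"
  proof -
    have "[:-1, 1:] * Qv = Qv * [:-1, 1:]" by (simp add: mult.commute)
    then show ?thesis unfolding Pv_Qv[OF assms(1)] mult_lin by (simp add: Hsum_diff Hsum_pCons0)
  qed
  also have "\<dots> = Gm n (k + 1) - Gm n k"
    unfolding Gm_def using uS_shift(2)[of "of_int n" "of_int k"] by simp
  finally show ?thesis .
qed


definition "Lq = degree Qv"
definition "PiF x y = Pif z Qv (uS x y) (dS x)"
definition "Den1 x y = pochhammer ((cu + of_int MM) + of_int MM * x + y) (nat (- MM))"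
definition "Den2 x (y::complex) = pochhammer ((cd + of_int NN) + of_int NN * x) (nat (- NN))"
definition "Den3 x y = pochhammer ((cu + cd) + of_int (MM + NN) * x + y) (nat (MM + NN))"
definition "P2f x y = pochhammer ((cu + cd + of_int MM + of_int NN) + of_int (MM + NN) * x + y) Lq"
definition "P1f x y = pochhammer ((cu + cd) + of_int (MM + NN) * x + y) Lq"
definition "Pkf x y = pochhammer ((cu + cd + 1) + of_int (MM + NN) * x + y) Lq"
definition "Wf x y = (cu + cd) + of_int (MM + NN) * x + y"
definition "Numf x y = exp (of_int (MM + NN) * Lz) * exp (- of_int NN * Lz1) * pochhammer (uS x y) (nat MM)
    * pochhammer (dS x) (nat NN) * pochhammer (uS (x + 1) y + dS (x + 1)) (nat (- (MM + NN)))"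
definition "Dp = rep Den1 * rep Den2"

lemma vals:
  "uS x y + dS x = (cu + cd) + of_int (MM + NN) * x + y"
  "uS x y + 1 + dS x = (cu + cd + 1) + of_int (MM + NN) * x + y"
  "uS x y + of_int MM = (cu + of_int MM) + of_int MM * x + y"
  "dS x + of_int NN = (cd + of_int NN) + of_int NN * x"
  "uS x y + of_int MM + (dS x + of_int NN) = (cu + cd + of_int MM + of_int NN) + of_int (MM + NN) * x + y"
  unfolding uS_def dS_def by (simp_all add: algebra_simps)

lemma pf_uS: "pf (\<lambda>x y. uS x y)" unfolding uS_def by (rule pf_aff)
lemma pf_uS1: "pf (\<lambda>x y. uS (x + 1) y)" unfolding uS_shift vals(3) by (rule pf_aff)
lemma pf_uSk: "pf (\<lambda>x y. uS x (y + 1))" unfolding uS_shift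
  using pf_add[OF pf_uS pf_const] .
lemma pf_dS: "pf (\<lambda>x y. dS x)" unfolding dS_def by (rule pf_affx)
lemma pf_dS1: "pf (\<lambda>x y. dS (x + 1))" unfolding uS_shift vals(4) by (rule pf_affx)
lemma pf_PiF: "pf PiF" unfolding PiF_def[abs_def] by (rule pf_Pif[OF pf_uS pf_dS])
lemma pf_PiF1: "pf (\<lambda>x y. PiF (x + 1) y)" unfolding PiF_def by (rule pf_Pif[OF pf_uS1 pf_dS1])
lemma pf_PiFk: "pf (\<lambda>x y. PiF x (y + 1))" unfolding PiF_def by (rule pf_Pif[OF pf_uSk pf_dS])

lemma pf_Den1: "pf Den1" unfolding Den1_def[abs_def] by (rule pf_poch[OF pf_aff])
lemma pf_Den2: "pf Den2" unfolding Den2_def[abs_def] by (rule pf_poch[OF pf_affx])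
lemma pf_Den3: "pf Den3" unfolding Den3_def[abs_def] by (rule pf_poch[OF pf_aff])
lemma pf_P2f: "pf P2f" unfolding P2f_def[abs_def] by (rule pf_poch[OF pf_aff])
lemma pf_P1f: "pf P1f" unfolding P1f_def[abs_def] by (rule pf_poch[OF pf_aff])
lemma pf_Pkf: "pf Pkf" unfolding Pkf_def[abs_def] by (rule pf_poch[OF pf_aff])
lemma pf_Wf: "pf Wf" unfolding Wf_def[abs_def] by (rule pf_aff)
lemma pf_Numf: "pf Numf"
proof -
  have a: "pf (\<lambda>x y. uS (x + 1) y + dS (x + 1))" using pf_add[OF pf_uS1 pf_dS1] .
  show ?thesis unfolding Numf_def[abs_def]
    by (rule pf_mult[OF pf_mult[OF pf_mult[OF pf_const pf_poch[OF pf_uS]] pf_poch[OF pf_dS]] pf_poch[OF a]])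
qed

lemma Dp_nz: "Dp \<noteq> 0"
proof -
  have "rep Den1 \<noteq> 0" unfolding Den1_def[abs_def] by (rule rep_poch_aff_nz)
  moreover have "rep Den2 \<noteq> 0" unfolding Den2_def[abs_def]
    by (rule rep_poch_affx_nz) auto
  ultimately show ?thesis unfolding Dp_def by simp
qed

lemma Gm_n1: "Gm (n + 1) k = Hsum Lz Lz1 Qv (uS (of_int n) (of_int k) + of_int MM) (dS (of_int n) + of_int NN)"
  unfolding Gm_def using uS_shift(1,3)[of "of_int n"] by simp
lemma Gm_k1: "Gm n (k + 1) = Hsum Lz Lz1 Qv (uS (of_int n) (of_int k) + 1) (dS (of_int n))"
  unfolding Gm_def using uS_shift(2)[of "of_int n" "of_int k"] by simp

lemma hyp_n:
  assumes "exp Lz = z"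
  shows "\<exists>p1 q1. q1 \<noteq> 0 \<and> (\<forall>n k. beval Dp (of_int n) (of_int k) \<noteq> 0 \<and> \<not> seed_bad K A B k0 a b n k \<longrightarrow>
            beval q1 (of_int n) (of_int k) * Gm (n + 1) k = beval p1 (of_int n) (of_int k) * Gm n k)"
proof -
  have core: "(Den1 x y \<noteq> 0 \<and> Den2 x y \<noteq> 0) \<Longrightarrow> uS x y \<notin> \<int>\<^sub>\<le>\<^sub>0 \<Longrightarrow> dS x \<notin> \<int>\<^sub>\<le>\<^sub>0 \<Longrightarrow>
      Hsum Lz Lz1 Qv (uS x y + of_int MM) (dS x + of_int NN) * P2f x y = Hf Lz Lz1 (uS x y + of_int MM) (dS x + of_int NN) * PiF (x + 1) y \<and>
      (P2f x y * (Den1 x y * Den2 x y * Den3 x y) * PiF x y) * Hsum Lz Lz1 Qv (uS x y + of_int MM) (dS x + of_int NN)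
      = (P1f x y * Numf x y * PiF (x + 1) y) * Hsum Lz Lz1 Qv (uS x y) (dS x)" for x y
  proof -
    assume dn: "Den1 x y \<noteq> 0 \<and> Den2 x y \<noteq> 0" and u1: "uS x y \<notin> \<int>\<^sub>\<le>\<^sub>0" and d1: "dS x \<notin> \<int>\<^sub>\<le>\<^sub>0"
    have u2: "uS x y + of_int MM \<notin> \<int>\<^sub>\<le>\<^sub>0"
      using poch_nonpole[OF u1, of MM] dn unfolding Den1_def vals(3)[symmetric] by simp
    have d2: "dS x + of_int NN \<notin> \<int>\<^sub>\<le>\<^sub>0"
      using poch_nonpole[OF d1, of NN] dn unfolding Den2_def vals(4)[symmetric] by simp
    have i3: "Hsum Lz Lz1 Qv (uS x y + of_int MM) (dS x + of_int NN) * P2f x y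
        = Hf Lz Lz1 (uS x y + of_int MM) (dS x + of_int NN) * PiF (x + 1) y"
      using G_Pi[OF assms u2, of Lz1 Qv "dS x + of_int NN"]
      unfolding P2f_def PiF_def Lq_def vals(5)[symmetric] uS_shift by simp
    have i4: "Hf Lz Lz1 (uS x y + of_int MM) (dS x + of_int NN) * (Den1 x y * Den2 x y * Den3 x y)
        = Hf Lz Lz1 (uS x y) (dS x) * Numf x y"
      using Hf_int_shift[OF u1 u2 d1 d2, of Lz Lz1]
      unfolding Den1_def Den2_def Den3_def Numf_def vals(3,4)[symmetric] vals(1)[symmetric] uS_shift
      by (simp add: algebra_simps)
    have i5: "Hsum Lz Lz1 Qv (uS x y) (dS x) * P1f x y = Hf Lz Lz1 (uS x y) (dS x) * PiF x y"
      using G_Pi[OF assms u1, of Lz1 Qv "dS x"]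
      unfolding P1f_def PiF_def Lq_def vals(1)[symmetric] by simp
    show ?thesis using i3 reo2[OF i3 i4 i5] by simp
  qed
  show ?thesis
  proof (cases "rep PiF = 0")
    case True
    have z0: "PiF x y = 0" for x y using rep_eval[OF pf_PiF, of x y] True by simp
    show ?thesis
    proof (intro exI conjI allI impI)
      show "rep P2f \<noteq> 0" unfolding P2f_def[abs_def] by (rule rep_poch_aff_nz)
      fix n k assume h: "beval Dp (of_int n) (of_int k) \<noteq> 0 \<and> \<not> seed_bad K A B k0 a b n k"
      have dn: "Den1 (of_int n) (of_int k) \<noteq> 0 \<and> Den2 (of_int n) (of_int k) \<noteq> 0"
        using h unfolding Dp_def by (simp add: rep_eval pf_Den1 pf_Den2)
      note c = core[OF dn nonpole_from_good[OF conjunct2[OF h]]]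
      show "beval (rep P2f) (of_int n) (of_int k) * Gm (n + 1) k = beval 0 (of_int n) (of_int k) * Gm n k"
        using conjunct1[OF c] unfolding Gm_n1 by (simp add: rep_eval pf_P2f z0 mult.commute)
    qed
  next
    case False
    show ?thesis
    proof (intro exI conjI allI impI)
      have "rep P2f \<noteq> 0" unfolding P2f_def[abs_def] by (rule rep_poch_aff_nz)
      moreover have "rep Den1 \<noteq> 0" unfolding Den1_def[abs_def] by (rule rep_poch_aff_nz)
      moreover have "rep Den2 \<noteq> 0" unfolding Den2_def[abs_def] by (rule rep_poch_affx_nz) auto
      moreover have "rep Den3 \<noteq> 0" unfolding Den3_def[abs_def] by (rule rep_poch_aff_nz)
      ultimately show "rep P2f * (rep Den1 * rep Den2 * rep Den3) * rep PiF \<noteq> 0" using False by simp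
      fix n k assume h: "beval Dp (of_int n) (of_int k) \<noteq> 0 \<and> \<not> seed_bad K A B k0 a b n k"
      have dn: "Den1 (of_int n) (of_int k) \<noteq> 0 \<and> Den2 (of_int n) (of_int k) \<noteq> 0"
        using h unfolding Dp_def by (simp add: rep_eval pf_Den1 pf_Den2)
      note c = core[OF dn nonpole_from_good[OF conjunct2[OF h]]]
      have pf3: "pf (\<lambda>x y. P1f x y * Numf x y * PiF (x + 1) y)"
        using pf_mult[OF pf_mult[OF pf_P1f pf_Numf] pf_PiF1] .
      show "beval (rep P2f * (rep Den1 * rep Den2 * rep Den3) * rep PiF) (of_int n) (of_int k) * Gm (n + 1) k
          = beval (rep (\<lambda>x y. P1f x y * Numf x y * PiF (x + 1) y)) (of_int n) (of_int k) * Gm n k"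
        using conjunct2[OF c] unfolding Gm_n1
        by (simp add: rep_eval[OF pf3] rep_eval pf_P2f pf_Den1 pf_Den2 pf_Den3 pf_PiF Gm_def)
    qed
  qed
qed

lemma hyp_k:
  assumes "exp Lz = z"
  shows "\<exists>p2 q2. q2 \<noteq> 0 \<and> (\<forall>n k. \<not> seed_bad K A B k0 a b n k \<longrightarrow>
            beval q2 (of_int n) (of_int k) * Gm n (k + 1) = beval p2 (of_int n) (of_int k) * Gm n k)"
proof -
  have core: "uS x y \<notin> \<int>\<^sub>\<le>\<^sub>0 \<Longrightarrow>
      Hsum Lz Lz1 Qv (uS x y + 1) (dS x) * Pkf x y = Hf Lz Lz1 (uS x y + 1) (dS x) * PiF x (y + 1) \<and>
      (Pkf x y * Wf x y * PiF x y) * Hsum Lz Lz1 Qv (uS x y + 1) (dS x)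
      = (P1f x y * (z * uS x y) * PiF x (y + 1)) * Hsum Lz Lz1 Qv (uS x y) (dS x)" for x y
  proof -
    assume u1: "uS x y \<notin> \<int>\<^sub>\<le>\<^sub>0"
    have u2: "uS x y + 1 \<notin> \<int>\<^sub>\<le>\<^sub>0" using nonpos_add_nat[OF u1, of 1] by simp
    have i3: "Hsum Lz Lz1 Qv (uS x y + 1) (dS x) * Pkf x y = Hf Lz Lz1 (uS x y + 1) (dS x) * PiF x (y + 1)"
      using G_Pi[OF assms u2, of Lz1 Qv "dS x"]
      unfolding Pkf_def PiF_def Lq_def vals(2)[symmetric] uS_shift by simp
    have i4: "Hf Lz Lz1 (uS x y + 1) (dS x) * Wf x y = Hf Lz Lz1 (uS x y) (dS x) * (z * uS x y)"
      using Hf_k[OF assms u1, of Lz1 "dS x"] unfolding Wf_def vals(1)[symmetric] by (simp add: ac_simps)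
    have i5: "Hsum Lz Lz1 Qv (uS x y) (dS x) * P1f x y = Hf Lz Lz1 (uS x y) (dS x) * PiF x y"
      using G_Pi[OF assms u1, of Lz1 Qv "dS x"]
      unfolding P1f_def PiF_def Lq_def vals(1)[symmetric] by simp
    show ?thesis using i3 reo2[OF i3 i4 i5] by simp
  qed
  show ?thesis
  proof (cases "rep PiF = 0")
    case True
    have z0: "PiF x y = 0" for x y using rep_eval[OF pf_PiF, of x y] True by simp
    show ?thesis
    proof (intro exI conjI allI impI)
      show "rep Pkf \<noteq> 0" unfolding Pkf_def[abs_def] by (rule rep_poch_aff_nz)
      fix n k assume h: "\<not> seed_bad K A B k0 a b n k"
      note c = core[OF nonpole_from_good(1)[OF h]]
      show "beval (rep Pkf) (of_int n) (of_int k) * Gm n (k + 1) = beval 0 (of_int n) (of_int k) * Gm n k"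
        using conjunct1[OF c] unfolding Gm_k1 by (simp add: rep_eval pf_Pkf z0 mult.commute)
    qed
  next
    case False
    show ?thesis
    proof (intro exI conjI allI impI)
      have "rep Pkf \<noteq> 0" unfolding Pkf_def[abs_def] by (rule rep_poch_aff_nz)
      moreover have "rep Wf \<noteq> 0" unfolding Wf_def[abs_def] by (rule rep_aff_nz)
      ultimately show "rep Pkf * rep Wf * rep PiF \<noteq> 0" using False by simp
      fix n k assume h: "\<not> seed_bad K A B k0 a b n k"
      note c = core[OF nonpole_from_good(1)[OF h]]
      have pf3: "pf (\<lambda>x y. P1f x y * (z * uS x y) * PiF x (y + 1))"
        using pf_mult[OF pf_mult[OF pf_P1f pf_mult[OF pf_const pf_uS]] pf_PiFk] .
      show "beval (rep Pkf * rep Wf * rep PiF) (of_int n) (of_int k) * Gm n (k + 1)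
          = beval (rep (\<lambda>x y. P1f x y * (z * uS x y) * PiF x (y + 1))) (of_int n) (of_int k) * Gm n k"
        using conjunct2[OF c] unfolding Gm_k1
        by (simp add: rep_eval[OF pf3] rep_eval pf_Pkf pf_Wf pf_PiF Gm_def)
    qed
  qed
qed


lemma main:
  assumes "z \<noteq> 1" "exp Lz = z" "exp Lz1 = z - 1"
  shows "wz_mate (\<lambda>n k. F0 Lz Lz1 (of_int (K * n) + k0 + of_int k) (of_int (A * n) + a) (of_int (B * n) + b))
                   Gm (seed_bad K A B k0 a b)"
proof -
  obtain p1 q1 where h1: "q1 \<noteq> 0" "\<forall>n k. beval Dp (of_int n) (of_int k) \<noteq> 0 \<and> \<not> seed_bad K A B k0 a b n k \<longrightarrow>
            beval q1 (of_int n) (of_int k) * Gm (n + 1) k = beval p1 (of_int n) (of_int k) * Gm n k"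
    using hyp_n[OF assms(2)] by blast
  obtain p2 q2 where h2: "q2 \<noteq> 0" "\<forall>n k. \<not> seed_bad K A B k0 a b n k \<longrightarrow>
            beval q2 (of_int n) (of_int k) * Gm n (k + 1) = beval p2 (of_int n) (of_int k) * Gm n k"
    using hyp_k[OF assms(2)] by blast
  have w: "\<not> seed_bad K A B k0 a b n k \<Longrightarrow> Fm (n + 1) k - Fm n k = Gm n (k + 1) - Gm n k" for n k
    using wz_eq[OF assms] by blast
  show ?thesis unfolding wz_mate_def
    apply (rule exI[of _ Dp], rule exI[of _ p1], rule exI[of _ q1], rule exI[of _ p2], rule exI[of _ q2])
    using Dp_nz h1 h2 w unfolding Fm_def by blast
qed

end

theorem theorem1:
  fixes z Lz Lz1 :: complex
  assumes "z \<noteq> 0" and "z \<noteq> 1" and "exp Lz = z" and "exp Lz1 = z - 1"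
  shows "\<forall>K A B :: int. \<forall>k0 a b :: complex. \<exists>G.
           wz_mate (\<lambda>n k. F0 Lz Lz1 (of_int (K * n) + k0 + of_int k) (of_int (A * n) + a) (of_int (B * n) + b))
                   G (seed_bad K A B k0 a b)"
  using main[OF assms(2,3,4)] by blast


end
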